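(* Let $T$ be an ergodic measure-preserving transformation of a Lebesgue probability space $(X,\mathcal B,\mu)$ and let $g\in L^1(X,\mu)$. Then for $\mu$-a.e. $x\in X$ the following holds. Suppose $(l_n)_{n\ge1}$ is a sequence of positive integers with $l_n\to\infty$, $R^g_{x,l_n}>0$ for all $n$, and suppose the functions $\varphi^g_{x,l_n}$ converge uniformly on $[0,1]$ to a continuous function $\varphi$. Then the sequence $(R^g_{x,l_n})_{n\ge1}$ is unbounded.
   Context: For $x\in X$ and an integer $j\ge0$ put $S^g_x(j)=\sum_{k=0}^{j-1}g(T^kx)$ (so $S^g_x(0)=0$), and let $F^g_x:[0,\infty)\to\mathbb R$ be the function that agrees with $S^g_x$ at nonnegative integers and is linear on each interval $[j,j+1]$. For a positive integer $l$ put $R^g_{x,l}=\max_{t\in[0,1]}\big|F^g_x(tl)-tF^g_x(l)\big|$ and, when $R^g_{x,l}>0$, $\varphi^g_{x,l}(t)=\big(F^g_x(tl)-tF^g_x(l)\big)/R^g_{x,l}$, $t\in[0,1]$. If $\varphi^g_{x,l_n}\to\varphi$ uniformly for some sequence $l_n$, the graph of $\varphi$ is called a limiting curve, $(l_n)$ a stabilizing sequence and $(R^g_{x,l_n})$ the normalizing sequence. *)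

theory Defs
  imports "HOL-Probability.Probability"
begin

definition mp_map :: "'a measure \<Rightarrow> ('a \<Rightarrow> 'a) \<Rightarrow> bool" where
  "mp_map M T \<longleftrightarrow> T \<in> M \<rightarrow>\<^sub>M M \<and> distr M M T = M"

definition ergodic_mp :: "'a measure \<Rightarrow> ('a \<Rightarrow> 'a) \<Rightarrow> bool" where
  "ergodic_mp M T \<longleftrightarrow> mp_map M T \<and>
     (\<forall>A \<in> sets M. T -` A \<inter> space M = A \<longrightarrow> measure M A = 0 \<or> measure M A = 1)"

definition birk_sum :: "('a \<Rightarrow> 'a) \<Rightarrow> ('a \<Rightarrow> real) \<Rightarrow> 'a \<Rightarrow> nat \<Rightarrow> real" where
  "birk_sum T g x j = (\<Sum>k<j. g ((T ^^ k) x))"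

definition birk_F :: "('a \<Rightarrow> 'a) \<Rightarrow> ('a \<Rightarrow> real) \<Rightarrow> 'a \<Rightarrow> real \<Rightarrow> real" where
  "birk_F T g x t = birk_sum T g x (nat \<lfloor>t\<rfloor>)
      + (t - of_int \<lfloor>t\<rfloor>) * (birk_sum T g x (Suc (nat \<lfloor>t\<rfloor>)) - birk_sum T g x (nat \<lfloor>t\<rfloor>))"

text \<open>R^g_{x,l} = max_{t in [0,1]} |F(tl) - t F(l)| (the max exists by continuity).\<close>
definition birk_R :: "('a \<Rightarrow> 'a) \<Rightarrow> ('a \<Rightarrow> real) \<Rightarrow> 'a \<Rightarrow> nat \<Rightarrow> real" where
  "birk_R T g x l = (SUP t\<in>{0..1}. \<bar>birk_F T g x (t * real l) - t * birk_F T g x (real l)\<bar>)"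

text \<open>Normalized curve phi^g_{x,l}(t) (meaningful when R > 0).\<close>
definition birk_phi :: "('a \<Rightarrow> 'a) \<Rightarrow> ('a \<Rightarrow> real) \<Rightarrow> 'a \<Rightarrow> nat \<Rightarrow> real \<Rightarrow> real" where
  "birk_phi T g x l t = (birk_F T g x (t * real l) - t * birk_F T g x (real l)) / birk_R T g x l"

end

theory Submission
  imports Defs
begin

lemma birk_F_0: "birk_F T g x 0 = 0"
  by (simp add: birk_F_def birk_sum_def)

lemma key:
  fixes x :: 'a and l :: "nat \<Rightarrow> nat" and \<phi> :: "real \<Rightarrow> real"
  assumes lpos: "\<forall>n. 0 < l n" and lim: "filterlim l at_top sequentially"
    and Rpos: "\<forall>n. 0 < birk_R T g x (l n)"
    and cont: "continuous_on {0..1} \<phi>"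
    and ul: "uniform_limit {0..1} (\<lambda>n. birk_phi T g x (l n)) \<phi> sequentially"
  shows "\<not> bounded (range (\<lambda>n. birk_R T g x (l n)))"
proof
  assume "bounded (range (\<lambda>n. birk_R T g x (l n)))"
  then obtain C where C: "C > 0" "\<And>n. \<bar>birk_R T g x (l n)\<bar> \<le> C"
    unfolding bounded_pos by force
  define F where "F = birk_F T g x"
  define G where "G = (\<lambda>L t. F (t * real L) - t * F (real L))"
  have Rdef: "birk_R T g x L = (SUP t\<in>{0..1}. \<bar>G L t\<bar>)" for L
    by (simp add: birk_R_def G_def F_def)
  have phidef: "birk_phi T g x L t = G L t / birk_R T g x L" for L t
    by (simp add: birk_phi_def G_def F_def)
  let ?m = "l 0"
  have bound: "birk_R T g x ?m \<le> 6 * C * \<epsilon>" if eps: "\<epsilon> > 0" for \<epsilon>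
  proof -
    obtain \<delta> where d: "\<delta> > 0" "\<And>w. w \<in> {0..1} \<Longrightarrow> dist w 0 < \<delta> \<Longrightarrow> dist (\<phi> w) (\<phi> 0) < \<epsilon>"
    proof -
      have z: "(0::real) \<in> {0..1}" by simp
      from cont have "\<forall>x\<in>{0..1}. \<forall>e>0. \<exists>d>0. \<forall>x'\<in>{0..1}. dist x' x < d \<longrightarrow> dist (\<phi> x') (\<phi> x) < e"
        by (simp only: continuous_on_iff)
      from this[rule_format, OF z eps] obtain d where "d > 0" "\<forall>x'\<in>{0..1}. dist x' 0 < d \<longrightarrow> dist (\<phi> x') (\<phi> 0) < \<epsilon>"
        by blast
      thus ?thesis using that by blast
    qed
    have ev1: "\<forall>\<^sub>F n in sequentially. \<forall>w\<in>{0..1}. dist (birk_phi T g x (l n) w) (\<phi> w) < \<epsilon>"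
      by (rule uniform_limitD[OF ul eps])
    have ev2: "\<forall>\<^sub>F n in sequentially. real (nat \<lceil>real ?m / \<delta>\<rceil> + 1 + ?m) \<le> real (l n)"
    proof -
      have "\<forall>\<^sub>F n in sequentially. nat \<lceil>real ?m / \<delta>\<rceil> + 1 + ?m \<le> l n"
        using lim by (simp only: filterlim_at_top)
      thus ?thesis by (rule eventually_mono) (simp only: of_nat_le_iff)
    qed
    obtain n where n1: "\<forall>w\<in>{0..1}. dist (birk_phi T g x (l n) w) (\<phi> w) < \<epsilon>"
      and n2: "real (nat \<lceil>real ?m / \<delta>\<rceil> + 1 + ?m) \<le> real (l n)"
    proof -
      from eventually_conj[OF ev1 ev2] obtain N where
        "\<And>k. k \<ge> N \<Longrightarrow> (\<forall>w\<in>{0..1}. dist (birk_phi T g x (l k) w) (\<phi> w) < \<epsilon>) \<and>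
          real (nat \<lceil>real ?m / \<delta>\<rceil> + 1 + ?m) \<le> real (l k)"
        unfolding eventually_sequentially by blast
      from this[of N] that show ?thesis by blast
    qed
    define L where "L = l n"
    have Lpos: "real L > 0" using lpos L_def by simp
    have RL: "birk_R T g x L > 0" "birk_R T g x L \<le> C"
      using Rpos C(2)[of n] L_def by auto
    have "real ?m / \<delta> < real L"
      using n2 L_def real_nat_ceiling_ge[of "real ?m / \<delta>"] by simp
    hence vsmall: "real ?m / real L < \<delta>"
      using d(1) Lpos by (simp add: field_simps)
    have P0: "birk_phi T g x L 0 = 0"
      by (simp add: birk_phi_def birk_F_0)
    have Gsmall: "\<bar>G L w\<bar> \<le> 3 * C * \<epsilon>" if w: "w \<in> {0..1}" "w < \<delta>" for w
    proof -
      have a: "\<bar>birk_phi T g x L w - \<phi> w\<bar> < \<epsilon>" using n1 w(1) L_def by (simp add: dist_real_def)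
      have b: "\<bar>\<phi> w - \<phi> 0\<bar> < \<epsilon>" using d(2)[OF w(1)] w by (simp add: dist_real_def)
      have c: "\<bar>birk_phi T g x L 0 - \<phi> 0\<bar> < \<epsilon>" using n1 L_def by (simp add: dist_real_def)
      have P: "\<bar>birk_phi T g x L w\<bar> \<le> 3 * \<epsilon>" using a b c P0 by linarith
      have "G L w = birk_R T g x L * birk_phi T g x L w"
        using RL(1) by (simp add: phidef)
      hence "\<bar>G L w\<bar> = birk_R T g x L * \<bar>birk_phi T g x L w\<bar>" using RL(1) by (simp add: abs_mult)
      also have "\<dots> \<le> C * (3 * \<epsilon>)"
        using RL P by (intro mult_mono) auto
      finally show ?thesis by simp
    qed
    show ?thesis unfolding Rdef
    proof (rule cSUP_least)
      show "{0..1::real} \<noteq> {}" by simp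
    next
      fix s :: real assume s: "s \<in> {0..1}"
      define v where "v = real ?m / real L"
      define u where "u = s * v"
      have v01: "v \<in> {0..1}" "v < \<delta>"
      proof -
        have "real ?m \<le> real L"
        proof -
          show ?thesis using n2 L_def by simp
        qed
        thus "v \<in> {0..1}" using Lpos by (simp add: v_def)
        show "v < \<delta>" using vsmall v_def by simp
      qed
      have u01: "u \<in> {0..1}" "u < \<delta>"
      proof -
        have "s * v \<le> v" using s v01(1) by (intro mult_left_le_one_le) auto
        moreover have "0 \<le> s * v" using s v01(1) by simp
        ultimately show "u \<in> {0..1}" "u < \<delta>" using v01 unfolding u_def by auto
      qed
      have e1: "u * real L = s * real ?m" using Lpos by (simp add: u_def v_def)
      have e2: "v * real L = real ?m" using Lpos by (simp add: v_def)
      have "G ?m s = G L u - s * G L v"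
      proof -
        have "G L u - s * G L v = F (u * real L) - u * F (real L) - s * (F (v * real L) - v * F (real L))"
          by (simp add: G_def)
        also have "\<dots> = F (s * real ?m) - s * F (real ?m)"
          unfolding u_def mult.assoc e2 by (simp add: algebra_simps)
        finally show ?thesis by (simp add: G_def)
      qed
      hence "\<bar>G ?m s\<bar> \<le> \<bar>G L u\<bar> + s * \<bar>G L v\<bar>"
      proof -
        have "\<bar>G L u - s * G L v\<bar> \<le> \<bar>G L u\<bar> + \<bar>s * G L v\<bar>" by (rule abs_triangle_ineq4)
        moreover have "\<bar>s * G L v\<bar> = s * \<bar>G L v\<bar>" using s by (simp add: abs_mult)
        ultimately show ?thesis using \<open>G ?m s = G L u - s * G L v\<close> by simp
      qed
      also have "\<dots> \<le> 3 * C * \<epsilon> + 1 * (3 * C * \<epsilon>)"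
        using Gsmall[OF u01] Gsmall[OF v01] s by (intro add_mono mult_mono) auto
      finally show "\<bar>G ?m s\<bar> \<le> 6 * C * \<epsilon>" by simp
    qed
  qed
  have Rm: "birk_R T g x ?m > 0" using Rpos by simp
  have "birk_R T g x ?m \<le> 6 * C * (birk_R T g x ?m / (12 * C))"
    using bound[of "birk_R T g x ?m / (12 * C)"] Rm C(1) by simp
  moreover have "6 * C * (birk_R T g x ?m / (12 * C)) = birk_R T g x ?m / 2"
    using C(1) by simp
  ultimately show False using Rm by linarith
qed

theorem mainTheorem1:
  fixes M :: "'a measure" and T :: "'a \<Rightarrow> 'a" and g :: "'a \<Rightarrow> real"
  assumes "prob_space M"
    and "ergodic_mp M T"
    and "integrable M g"
  shows "AE x in M. \<forall>(l :: nat \<Rightarrow> nat) (\<phi> :: real \<Rightarrow> real).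
           (\<forall>n. 0 < l n) \<and> filterlim l at_top sequentially \<and>
           (\<forall>n. 0 < birk_R T g x (l n)) \<and>
           continuous_on {0..1} \<phi> \<and>
           uniform_limit {0..1} (\<lambda>n. birk_phi T g x (l n)) \<phi> sequentially
           \<longrightarrow> \<not> bounded (range (\<lambda>n. birk_R T g x (l n)))"
  apply (rule AE_I2)
  apply (intro allI impI)
  apply (elim conjE)
  apply (rule key)
      apply assumption+
  done

end
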